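(* Let $K$ be a field, $S=K[x_1,\ldots,x_n]$, $I\subset S$ a monomial ideal with $I\ne S$, with $\mathbb{Z}^n$-graded minimal free resolution of $S/I$, multidegrees $a_{ij}$ and scalar matrices $\lambda^{(i)}$ as in the context. Let $1\le i\le p$ and let $\mu=(\mu_1,\ldots,\mu_{\beta_i})^T\in K^{\beta_i}$ with $\lambda^{(i)}\mu=0$. Let $k_1<\cdots<k_r$ be the indices with $\mu_{k_t}\ne0$. Then there exists $\rho=(\rho_1,\ldots,\rho_{\beta_{i+1}})^T\in K^{\beta_{i+1}}$ with $\lambda^{(i+1)}\rho=\mu$ and such that $x^{a_{i+1,j}}$ divides $\operatorname{lcm}(x^{a_{ik_1}},\ldots,x^{a_{ik_r}})$ for all $j$ with $\rho_j\ne0$.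
   Context: For $a\in\mathbb{N}^n$, $x^a=x_1^{a(1)}\cdots x_n^{a(n)}$. Let $0\to F_p\to\cdots\to F_1\to F_0\to S/I\to 0$ be the $\mathbb{Z}^n$-graded minimal free resolution of $S/I$ with differential $\partial$, where $F_0=S$ with basis $f_{01}$ of degree $0$, and $F_i=\bigoplus_{j=1}^{\beta_i}Sf_{ij}$ with $f_{ij}$ homogeneous of multidegree $a_{ij}\in\mathbb{N}^n$; set $\beta_{p+1}=0$ and $\lambda^{(p+1)}$ the empty matrix. Write $\partial(f_{ij})=\sum_k\lambda^{(i)}_{kj}x^{a_{ij}-a_{i-1,k}}f_{i-1,k}$ with $\lambda^{(i)}_{kj}\in K$, where $\lambda^{(i)}_{kj}=0$ whenever $a_{ij}-a_{i-1,k}\notin\mathbb{N}^n$; $\lambda^{(i)}=(\lambda^{(i)}_{kj})\in K^{\beta_{i-1}\times\beta_i}$. The lcm of an empty family is $1$. *)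

theory Defs
  imports "HOL-Library.Poly_Mapping"
begin

text \<open>Polynomials over K in variables x_0, x_1, ... as finitely supported maps from
 exponent vectors (nat =>0 nat) to coefficients.  S = K[x_0..x_{n-1}] is the subset
 of polynomials only involving the variables with index < n.\<close>

type_synonym 'k mpoly = "(nat \<Rightarrow>\<^sub>0 nat) \<Rightarrow>\<^sub>0 'k"

definition expvec :: "nat \<Rightarrow> (nat \<Rightarrow>\<^sub>0 nat) \<Rightarrow> bool" where
  "expvec n a \<longleftrightarrow> Poly_Mapping.keys a \<subseteq> {..<n}"

definition in_S :: "nat \<Rightarrow> 'k::zero mpoly \<Rightarrow> bool" where
  "in_S n f \<longleftrightarrow> (\<forall>m\<in>Poly_Mapping.keys f. expvec n m)"

definition xpow :: "(nat \<Rightarrow>\<^sub>0 nat) \<Rightarrow> 'k::{zero,one} mpoly" where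
  "xpow a = Poly_Mapping.single a 1"

definition scal :: "'k::zero \<Rightarrow> 'k mpoly" where
  "scal c = Poly_Mapping.single 0 c"

definition exp_le :: "(nat \<Rightarrow>\<^sub>0 nat) \<Rightarrow> (nat \<Rightarrow>\<^sub>0 nat) \<Rightarrow> bool" where
  "exp_le a b \<longleftrightarrow> (\<forall>v. Poly_Mapping.lookup a v \<le> Poly_Mapping.lookup b v)"

definition monomial_ideal_gen :: "nat \<Rightarrow> (nat \<Rightarrow>\<^sub>0 nat) set \<Rightarrow> 'k::comm_ring_1 mpoly set" where
  "monomial_ideal_gen n G = {f. \<exists>F q. finite F \<and> F \<subseteq> G \<and> (\<forall>g\<in>F. in_S n (q g))
       \<and> f = (\<Sum>g\<in>F. q g * xpow g)}"

definition monomial_ideal :: "nat \<Rightarrow> 'k::comm_ring_1 mpoly set \<Rightarrow> bool" where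
  "monomial_ideal n I \<longleftrightarrow> (\<exists>G. (\<forall>g\<in>G. expvec n g) \<and> I = monomial_ideal_gen n G)"

text \<open>lcm of the monomials x^a, a in A (A finite); lcm of the empty family is 1\<close>
definition mono_lcm :: "(nat \<Rightarrow>\<^sub>0 nat) set \<Rightarrow> 'k::{zero,one} mpoly" where
  "mono_lcm A = xpow (Abs_poly_mapping (\<lambda>v. Max (insert 0 ((\<lambda>a. Poly_Mapping.lookup a v) ` A))))"

text \<open>The free module F_i = S^{beta i}, elements are coordinate vectors (nat => poly),
  zero outside the index range {..< beta i} (0-based basis indices).\<close>
definition free_mod :: "nat \<Rightarrow> nat \<Rightarrow> (nat \<Rightarrow> 'k::zero mpoly) set" where
  "free_mod n b = {v. (\<forall>j<b. in_S n (v j)) \<and> (\<forall>j\<ge>b. v j = 0)}"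

definition diff :: "(nat \<Rightarrow> nat) \<Rightarrow> (nat \<Rightarrow> nat \<Rightarrow> (nat \<Rightarrow>\<^sub>0 nat)) \<Rightarrow> (nat \<Rightarrow> nat \<Rightarrow> nat \<Rightarrow> 'k::comm_ring_1)
    \<Rightarrow> nat \<Rightarrow> (nat \<Rightarrow> 'k mpoly) \<Rightarrow> (nat \<Rightarrow> 'k mpoly)" where
  "diff \<beta> a lam i v = (\<lambda>k. if k < \<beta> (i - 1) then
       (\<Sum>j<\<beta> i. scal (lam i k j) * xpow (a i j - a (i - 1) k) * v j) else 0)"

definition graded_min_free_res ::
  "nat \<Rightarrow> 'k::field mpoly set \<Rightarrow> nat \<Rightarrow> (nat \<Rightarrow> nat) \<Rightarrow> (nat \<Rightarrow> nat \<Rightarrow> (nat \<Rightarrow>\<^sub>0 nat))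
     \<Rightarrow> (nat \<Rightarrow> nat \<Rightarrow> nat \<Rightarrow> 'k) \<Rightarrow> bool" where
  "graded_min_free_res n I p \<beta> a lam \<longleftrightarrow>
     \<beta> 0 = 1 \<and> a 0 0 = 0 \<and> (\<forall>i>p. \<beta> i = 0)
   \<and> (\<forall>i j. j < \<beta> i \<longrightarrow> expvec n (a i j))
   \<comment> \<open>homogeneity of the differential\<close>
   \<and> (\<forall>i k j. 1 \<le> i \<longrightarrow> k < \<beta> (i - 1) \<longrightarrow> j < \<beta> i \<longrightarrow>
        \<not> exp_le (a (i - 1) k) (a i j) \<longrightarrow> lam i k j = 0)
   \<comment> \<open>minimality: d(F_i) contained in m F_{i-1}\<close>
   \<and> (\<forall>i k j. 1 \<le> i \<longrightarrow> k < \<beta> (i - 1) \<longrightarrow> j < \<beta> i \<longrightarrow>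
        a i j = a (i - 1) k \<longrightarrow> lam i k j = 0)
   \<comment> \<open>exactness at F_i for i >= 1 (at F_p this is injectivity, as F_{p+1} = 0)\<close>
   \<and> (\<forall>i\<ge>1. {v \<in> free_mod n (\<beta> i). diff \<beta> a lam i v = (\<lambda>_. 0)}
              = diff \<beta> a lam (i + 1) ` free_mod n (\<beta> (i + 1)))
   \<comment> \<open>augmentation: image of d_1 in F_0 = S is I, so coker d_1 = S/I\<close>
   \<and> (\<lambda>w. w 0) ` diff \<beta> a lam 1 ` free_mod n (\<beta> 1) = I"

end

theory Submission imports Defs begin

lemma eq_add_iff_exp:
  fixes d e q :: "nat \<Rightarrow>\<^sub>0 nat"
  shows "(e = d + q) \<longleftrightarrow> (exp_le d e \<and> q = e - d)"
  unfolding exp_le_def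
  apply (auto simp: poly_mapping_eqI lookup_add lookup_minus)
  done

lemma lookup_single_mult:
  fixes f :: "'k::comm_semiring_1 mpoly"
  shows "Poly_Mapping.lookup (Poly_Mapping.single d c * f) e
     = (if exp_le d e then c * Poly_Mapping.lookup f (e - d) else 0)"
proof -
  have "Poly_Mapping.lookup (Poly_Mapping.single d c * f) e
     = (\<Sum>l. (c * (\<Sum>q. Poly_Mapping.lookup f q when e = l + q)) when d = l)"
    by (simp add: lookup_mult lookup_single when_mult)
  also have "\<dots> = c * (\<Sum>q. Poly_Mapping.lookup f q when e = d + q)"
    by simp
  also have "\<dots> = (if exp_le d e then c * Poly_Mapping.lookup f (e - d) else 0)"
    by (simp add: eq_add_iff_exp when_def)
  finally show ?thesis .
qed

lemma scal_xpow: "scal c * xpow e = (Poly_Mapping.single e c :: 'k::comm_semiring_1 mpoly)"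
  unfolding scal_def xpow_def by (simp add: mult_single)

lemma scal_xpow_mult: "scal c * xpow e * w = (Poly_Mapping.single e c * w :: 'k::comm_semiring_1 mpoly)"
  by (simp add: scal_xpow)

lemma exp_le_trans: "exp_le a b \<Longrightarrow> exp_le b c \<Longrightarrow> exp_le a c"
  unfolding exp_le_def using le_trans by blast

lemma sum_single_same:
  "finite A \<Longrightarrow> (\<Sum>k\<in>A. Poly_Mapping.single e (f k)) = Poly_Mapping.single e (\<Sum>k\<in>A. f k)"
  by (induction A rule: finite_induct) (auto simp: single_add)

theorem lemma1p8:
  fixes n :: nat and I :: "'k::field mpoly set" and p :: nat
    and \<beta> :: "nat \<Rightarrow> nat" and a :: "nat \<Rightarrow> nat \<Rightarrow> (nat \<Rightarrow>\<^sub>0 nat)"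
    and lam :: "nat \<Rightarrow> nat \<Rightarrow> nat \<Rightarrow> 'k"
    and i :: nat and \<mu> :: "nat \<Rightarrow> 'k"
  assumes "monomial_ideal n I"
    and "I \<noteq> {f. in_S n f}"
    and "graded_min_free_res n I p \<beta> a lam"
    and "1 \<le> i" and "i \<le> p"
    and "\<forall>j\<ge>\<beta> i. \<mu> j = 0"
    and "\<forall>k<\<beta> (i - 1). (\<Sum>j<\<beta> i. lam i k j * \<mu> j) = 0"
  shows "\<exists>\<rho> :: nat \<Rightarrow> 'k. (\<forall>j\<ge>\<beta> (i + 1). \<rho> j = 0)
     \<and> (\<forall>k<\<beta> i. (\<Sum>j<\<beta> (i + 1). lam (i + 1) k j * \<rho> j) = \<mu> k)
     \<and> (\<forall>j<\<beta> (i + 1). \<rho> j \<noteq> 0 \<longrightarrow>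
          xpow (a (i + 1) j) dvd (mono_lcm (a i ` {k. k < \<beta> i \<and> \<mu> k \<noteq> 0}) :: 'k mpoly))"
proof -
  note R = assms(3)[unfolded graded_min_free_res_def]
  have R4: "\<forall>i j. j < \<beta> i \<longrightarrow> expvec n (a i j)"
    using R[THEN conjunct2, THEN conjunct2, THEN conjunct2, THEN conjunct1] .
  have R5: "\<forall>i k j. 1 \<le> i \<longrightarrow> k < \<beta> (i - 1) \<longrightarrow> j < \<beta> i \<longrightarrow>
        \<not> exp_le (a (i - 1) k) (a i j) \<longrightarrow> lam i k j = 0"
    using R[THEN conjunct2, THEN conjunct2, THEN conjunct2, THEN conjunct2, THEN conjunct1] .
  have R7: "\<forall>i\<ge>1. {v \<in> free_mod n (\<beta> i). diff \<beta> a lam i v = (\<lambda>_. 0)}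
              = diff \<beta> a lam (i + 1) ` free_mod n (\<beta> (i + 1))"
    using R[THEN conjunct2, THEN conjunct2, THEN conjunct2, THEN conjunct2, THEN conjunct2, THEN conjunct2, THEN conjunct1] .
  have ev: "\<And>i j. j < \<beta> i \<Longrightarrow> expvec n (a i j)" using R4 by blast
  have hom: "\<And>i k j. 1 \<le> i \<Longrightarrow> k < \<beta> (i - 1) \<Longrightarrow> j < \<beta> i \<Longrightarrow>
        \<not> exp_le (a (i - 1) k) (a i j) \<Longrightarrow> lam i k j = 0" using R5 by blast
  have exact: "{v \<in> free_mod n (\<beta> i). diff \<beta> a lam i v = (\<lambda>_. 0)}
              = diff \<beta> a lam (i + 1) ` free_mod n (\<beta> (i + 1))" using R7 assms(4) by simp
  define A where "A = {k. k < \<beta> i \<and> \<mu> k \<noteq> 0}"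
  have finA: "finite A" unfolding A_def by simp
  define g where "g = (\<lambda>v. Max (insert 0 ((\<lambda>b. Poly_Mapping.lookup b v) ` (a i ` A))))"
  have gsupp: "{v. g v \<noteq> 0} \<subseteq> (\<Union>k\<in>A. Poly_Mapping.keys (a i k))"
  proof
    fix v assume "v \<in> {v. g v \<noteq> 0}"
    hence "g v \<noteq> 0" by simp
    moreover have "g v \<in> insert 0 ((\<lambda>b. Poly_Mapping.lookup b v) ` (a i ` A))"
      unfolding g_def using finA by (intro Max_in) auto
    ultimately obtain k where "k \<in> A" "Poly_Mapping.lookup (a i k) v \<noteq> 0"
      by auto
    thus "v \<in> (\<Union>k\<in>A. Poly_Mapping.keys (a i k))" by (auto simp: in_keys_iff)
  qed
  have fing: "finite {v. g v \<noteq> 0}"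
    by (rule finite_subset[OF gsupp]) (use finA in simp)
  define M where "M = Abs_poly_mapping g"
  have lookM: "Poly_Mapping.lookup M v = g v" for v
    unfolding M_def using fing by (simp add: Abs_poly_mapping_inverse)
  have lcm: "mono_lcm (a i ` A) = (xpow M :: 'k mpoly)"
    unfolding mono_lcm_def M_def g_def by simp
  have leM: "exp_le (a i k) M" if "k \<in> A" for k
    unfolding exp_le_def lookM g_def using finA that by (auto intro!: Max_ge)
  have evM: "expvec n M"
    unfolding expvec_def
  proof
    fix v assume "v \<in> Poly_Mapping.keys M"
    hence "g v \<noteq> 0" by (simp add: in_keys_iff lookM)
    hence "v \<in> (\<Union>k\<in>A. Poly_Mapping.keys (a i k))" using gsupp by blast
    then obtain k where "k \<in> A" "v \<in> Poly_Mapping.keys (a i k)" by blast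
    moreover have "expvec n (a i k)" using R4 \<open>k \<in> A\<close> unfolding A_def by blast
    ultimately show "v \<in> {..<n}" unfolding expvec_def by auto
  qed
  define v where "v = (\<lambda>k. if k < \<beta> i then scal (\<mu> k) * xpow (M - a i k) else (0::'k mpoly))"
  have vfree: "v \<in> free_mod n (\<beta> i)"
    unfolding free_mod_def
  proof (intro CollectI conjI allI impI)
    fix k assume k: "k < \<beta> i"
    have "Poly_Mapping.keys (M - a i k) \<subseteq> Poly_Mapping.keys M"
      by (auto simp: in_keys_iff lookup_minus)
    hence "expvec n (M - a i k)" using evM unfolding expvec_def by blast
    thus "in_S n (v k)" unfolding v_def in_S_def using k
      by (auto simp: scal_xpow split: if_splits)
  next
    fix k assume "\<beta> i \<le> k" thus "v k = 0" unfolding v_def by simp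
  qed
  have vker: "diff \<beta> a lam i v = (\<lambda>_. 0)"
  proof
    fix l
    show "diff \<beta> a lam i v l = 0"
    proof (cases "l < \<beta> (i - 1)")
      case False thus ?thesis unfolding diff_def by simp
    next
      case True
      have trm: "scal (lam i l k) * xpow (a i k - a (i - 1) l) * v k
          = Poly_Mapping.single (M - a (i - 1) l) (lam i l k * \<mu> k)" if k: "k < \<beta> i" for k
      proof (cases "lam i l k = 0 \<or> \<mu> k = 0")
        case True thus ?thesis using k unfolding v_def
          by (auto simp: scal_def)
      next
        case False
        hence kA: "k \<in> A" using k unfolding A_def by auto
        have le1: "exp_le (a (i - 1) l) (a i k)" using hom[OF assms(4) True k] False by blast
        have le2: "exp_le (a i k) M" using leM[OF kA] .
        have "a i k - a (i - 1) l + (M - a i k) = M - a (i - 1) l"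
        proof (rule poly_mapping_eqI)
          fix u
          have "Poly_Mapping.lookup (a (i - 1) l) u \<le> Poly_Mapping.lookup (a i k) u"
               "Poly_Mapping.lookup (a i k) u \<le> Poly_Mapping.lookup M u"
            using le1 le2 unfolding exp_le_def by blast+
          thus "Poly_Mapping.lookup (a i k - a (i - 1) l + (M - a i k)) u = Poly_Mapping.lookup (M - a (i - 1) l) u"
            by (simp add: lookup_add lookup_minus)
        qed
        thus ?thesis using k unfolding v_def
          by (simp add: scal_xpow mult.assoc mult_single)
      qed
      have "diff \<beta> a lam i v l = (\<Sum>k<\<beta> i. Poly_Mapping.single (M - a (i - 1) l) (lam i l k * \<mu> k))"
        unfolding diff_def using True trm by simp
      also have "\<dots> = Poly_Mapping.single (M - a (i - 1) l) (\<Sum>k<\<beta> i. lam i l k * \<mu> k)"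
        by (simp add: sum_single_same)
      also have "\<dots> = 0" using assms(7) True by simp
      finally show ?thesis .
    qed
  qed
  have "v \<in> diff \<beta> a lam (i + 1) ` free_mod n (\<beta> (i + 1))"
    using exact vfree vker by blast
  then obtain w where w: "w \<in> free_mod n (\<beta> (i + 1))" and vw: "v = diff \<beta> a lam (i + 1) w"
    by blast
  define \<rho> where "\<rho> = (\<lambda>j. if j < \<beta> (i + 1) \<and> exp_le (a (i + 1) j) M
      then Poly_Mapping.lookup (w j) (M - a (i + 1) j) else 0)"
  have hom1: "\<And>k j. k < \<beta> i \<Longrightarrow> j < \<beta> (i + 1) \<Longrightarrow>
        \<not> exp_le (a i k) (a (i + 1) j) \<Longrightarrow> lam (i + 1) k j = 0"
    using hom[of "i + 1"] by simp
  show ?thesis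
  proof (intro exI[of _ \<rho>] conjI allI impI)
    fix j assume "\<beta> (i + 1) \<le> j" thus "\<rho> j = 0" unfolding \<rho>_def by simp
  next
    fix j assume j: "j < \<beta> (i + 1)" and "\<rho> j \<noteq> 0"
    hence le: "exp_le (a (i + 1) j) M" unfolding \<rho>_def by (auto split: if_splits)
    have "M = a (i + 1) j + (M - a (i + 1) j)"
      using le unfolding exp_le_def by (intro poly_mapping_eqI) (simp add: lookup_add lookup_minus)
    hence "(xpow M :: 'k mpoly) = xpow (a (i + 1) j) * xpow (M - a (i + 1) j)"
      unfolding xpow_def by (simp add: mult_single)
    thus "xpow (a (i + 1) j) dvd (mono_lcm (a i ` {k. k < \<beta> i \<and> \<mu> k \<noteq> 0}) :: 'k mpoly)"
      using lcm unfolding A_def by (metis dvd_triv_left)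
  next
    fix k assume k: "k < \<beta> i"
    show "(\<Sum>j<\<beta> (i + 1). lam (i + 1) k j * \<rho> j) = \<mu> k"
    proof (cases "exp_le (a i k) M")
      case False
      hence "\<mu> k = 0" using leM k unfolding A_def by blast
      moreover have "lam (i + 1) k j * \<rho> j = 0" if j: "j < \<beta> (i + 1)" for j
      proof (rule ccontr)
        assume "lam (i + 1) k j * \<rho> j \<noteq> 0"
        hence "lam (i + 1) k j \<noteq> 0" "\<rho> j \<noteq> 0" by auto
        hence "exp_le (a i k) (a (i + 1) j)" "exp_le (a (i + 1) j) M"
          using hom1[OF k j] unfolding \<rho>_def by (auto split: if_splits)
        thus False using False exp_le_trans by blast
      qed
      ultimately show ?thesis by (simp add: sum.neutral)
    next
      case True
      define e where "e = M - a i k"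
      have "Poly_Mapping.lookup (v k) e = \<mu> k"
        using k unfolding v_def by (simp add: scal_xpow e_def)
      also have "v k = (\<Sum>j<\<beta> (i + 1). Poly_Mapping.single (a (i + 1) j - a i k) (lam (i + 1) k j) * w j)"
        using k unfolding vw diff_def by (simp add: scal_xpow_mult)
      finally have eq: "(\<Sum>j<\<beta> (i + 1). Poly_Mapping.lookup (Poly_Mapping.single (a (i + 1) j - a i k) (lam (i + 1) k j) * w j) e) = \<mu> k"
        by (simp add: lookup_sum)
      have tm: "Poly_Mapping.lookup (Poly_Mapping.single (a (i + 1) j - a i k) (lam (i + 1) k j) * w j) e
            = lam (i + 1) k j * \<rho> j" if j: "j < \<beta> (i + 1)" for j
      proof (cases "lam (i + 1) k j = 0")
        case True thus ?thesis by (simp add: lookup_single_mult)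
      next
        case False
        hence le1: "exp_le (a i k) (a (i + 1) j)" using hom1[OF k j] by blast
        show ?thesis
        proof (cases "exp_le (a (i + 1) j) M")
          case True
          have "exp_le (a (i + 1) j - a i k) e"
            using True unfolding e_def exp_le_def by (simp add: lookup_minus diff_le_mono)
          moreover have "e - (a (i + 1) j - a i k) = M - a (i + 1) j"
            using True le1 unfolding e_def exp_le_def
            by (intro poly_mapping_eqI) (simp add: lookup_minus)
          ultimately show ?thesis using True j unfolding \<rho>_def by (simp add: lookup_single_mult)
        next
          case False
          then obtain u where u: "Poly_Mapping.lookup M u < Poly_Mapping.lookup (a (i + 1) j) u"
            unfolding exp_le_def by (auto simp: not_le)
          have "\<not> exp_le (a (i + 1) j - a i k) e"
          proof
            assume "exp_le (a (i + 1) j - a i k) e"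
            hence "Poly_Mapping.lookup (a (i + 1) j) u - Poly_Mapping.lookup (a i k) u
                 \<le> Poly_Mapping.lookup M u - Poly_Mapping.lookup (a i k) u"
              unfolding exp_le_def e_def by (simp add: lookup_minus)
            moreover have "Poly_Mapping.lookup (a i k) u \<le> Poly_Mapping.lookup M u"
              using \<open>exp_le (a i k) M\<close> unfolding exp_le_def by blast
            ultimately show False using u by linarith
          qed
          thus ?thesis using False unfolding \<rho>_def by (simp add: lookup_single_mult)
        qed
      qed
      show ?thesis using eq tm by simp
    qed
  qed
qed

end
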